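(* Let $n\ge 2$, $d\ge 2$ and $\mathbf{m}\in\mathbb{N}^n$ with $|\mathbf{m}|=d$ and $\max(\mathbf{m})<d-1$. Then $\mathcal{A}_{n,d}\setminus\mathcal{A}_{n,d,\mathbf{m}}=\{\mathbf{m}\}$.
   Context: For $\mathbf{a}\in\mathbb{N}^n$, $|\mathbf{a}|=\sum_i a_i$ and $\max(\mathbf{a})=\max_i a_i$. $T_{n,d}=\{\mathbf{a}\in\mathbb{N}^n:|\mathbf{a}|=d\}$; $\mathcal{A}_{n,d}$ is the (additive) semigroup generated by $T_{n,d}$; for $\mathbf{m}\in T_{n,d}$, $\mathcal{A}_{n,d,\mathbf{m}}$ is the semigroup generated by $T_{n,d}\setminus\{\mathbf{m}\}$. *)

theory Defs
  imports Main
begin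

text \<open>Vectors in N^n are represented as functions nat => nat vanishing outside {..<n}.\<close>

definition abs_vec :: "nat \<Rightarrow> (nat \<Rightarrow> nat) \<Rightarrow> nat" where
  "abs_vec n a = (\<Sum>i<n. a i)"

definition max_vec :: "nat \<Rightarrow> (nat \<Rightarrow> nat) \<Rightarrow> nat" where
  "max_vec n a = Max (a ` {..<n})"

definition T :: "nat \<Rightarrow> nat \<Rightarrow> (nat \<Rightarrow> nat) set" where
  "T n d = {a. (\<forall>i\<ge>n. a i = 0) \<and> abs_vec n a = d}"

inductive_set semigen :: "(nat \<Rightarrow> nat) set \<Rightarrow> (nat \<Rightarrow> nat) set" for S where
  base: "x \<in> S \<Longrightarrow> x \<in> semigen S"
| add: "x \<in> semigen S \<Longrightarrow> y \<in> semigen S \<Longrightarrow> (\<lambda>i. x i + y i) \<in> semigen S"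

definition A :: "nat \<Rightarrow> nat \<Rightarrow> (nat \<Rightarrow> nat) set" where
  "A n d = semigen (T n d)"

definition A_m :: "nat \<Rightarrow> nat \<Rightarrow> (nat \<Rightarrow> nat) \<Rightarrow> (nat \<Rightarrow> nat) set" where
  "A_m n d m = semigen (T n d - {m})"

end

theory Submission
  imports Defs
begin

definition mv :: "(nat \<Rightarrow> nat) \<Rightarrow> nat \<Rightarrow> nat \<Rightarrow> nat \<Rightarrow> nat" where
  "mv v i j = v(i := Suc (v i), j := v j - 1)"

lemma sum_two:
  fixes f :: "nat \<Rightarrow> nat"
  assumes "i < n" "j < n" "i \<noteq> j"
  shows "sum f {..<n} = f i + f j + sum f ({..<n} - {i} - {j})"
proof -
  have "sum f {..<n} = f i + sum f ({..<n} - {i})"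
    using assms by (simp add: sum.remove)
  also have "sum f ({..<n} - {i}) = f j + sum f ({..<n} - {i} - {j})"
    using assms by (simp add: sum.remove)
  finally show ?thesis by simp
qed

lemma T_mv:
  assumes "v \<in> T n d" "i < n" "j < n" "i \<noteq> j" "v j \<ge> 1"
  shows "mv v i j \<in> T n d"
proof -
  have z: "\<forall>k\<ge>n. v k = 0" and s: "sum v {..<n} = d"
    using assms(1) by (auto simp: T_def abs_vec_def)
  have "sum (mv v i j) {..<n} = mv v i j i + mv v i j j + sum (mv v i j) ({..<n} - {i} - {j})"
    using sum_two assms by blast
  also have "sum (mv v i j) ({..<n} - {i} - {j}) = sum v ({..<n} - {i} - {j})"
    by (rule sum.cong) (auto simp: mv_def)
  also have "mv v i j i + mv v i j j = v i + v j" using assms by (simp add: mv_def)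
  also have "v i + v j + sum v ({..<n} - {i} - {j}) = sum v {..<n}"
    using sum_two assms by metis
  finally show ?thesis using z s assms by (auto simp: T_def abs_vec_def mv_def)
qed

lemma semigen_abs:
  assumes "x \<in> semigen S" "S \<subseteq> T n d" "d > 0"
  shows "abs_vec n x \<ge> d \<and> (abs_vec n x = d \<longrightarrow> x \<in> S)"
  using assms(1)
proof induction
  case (base x)
  then show ?case using assms by (auto simp: T_def)
next
  case (add x y)
  have "abs_vec n (\<lambda>i. x i + y i) = abs_vec n x + abs_vec n y"
    by (simp add: abs_vec_def sum.distrib)
  then show ?case using add assms by auto
qed

lemma semigen_mono: "x \<in> semigen S \<Longrightarrow> S \<subseteq> S' \<Longrightarrow> x \<in> semigen S'"
  by (induction rule: semigen.induct) (auto intro: semigen.intros)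

lemma pair_in:
  assumes "a \<in> T n d" "b \<in> T n d" "a \<noteq> m" "b \<noteq> m"
  shows "(\<lambda>t. a t + b t) \<in> A_m n d m"
  unfolding A_m_def using assms semigen.add[OF semigen.base semigen.base, of a "T n d - {m}" b] by auto

theorem lemma2p17:
  fixes n d :: nat and m :: "nat \<Rightarrow> nat"
  assumes "n \<ge> 2" and "d \<ge> 2" and "m \<in> T n d" and "max_vec n m < d - 1"
  shows "A n d - A_m n d m = {m}"
proof -
  have mz: "\<forall>k\<ge>n. m k = 0" and ms: "sum m {..<n} = d"
    using assms(3) by (auto simp: T_def abs_vec_def)
  have mle: "m k \<le> d - 2" if "k < n" for k
  proof -
    have "m k \<le> max_vec n m" unfolding max_vec_def using that by (intro Max_ge) auto
    then show ?thesis using assms(4) by linarith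
  qed
  have mAm: "m \<notin> A_m n d m"
    using semigen_abs[of m "T n d - {m}" n d] assms unfolding A_m_def by (auto simp: T_def)
  have key1: "(\<lambda>t. m t + g t) \<in> A_m n d m" if g: "g \<in> T n d" for g
  proof (cases "g = m")
    case True
    obtain i where i: "i < n" "m i \<ge> 1"
    proof (rule ccontr)
      assume "\<not> thesis"
      then have "\<forall>i<n. m i = 0" using that by force
      then have "sum m {..<n} = 0" by simp
      then show False using ms assms by simp
    qed
    obtain j where j: "j < n" "j \<noteq> i" "m j \<ge> 1"
    proof (rule ccontr)
      assume "\<not> thesis"
      then have "\<forall>k\<in>{..<n} - {i}. m k = 0" using that by force
      then have "sum m ({..<n} - {i}) = 0" by simp
      moreover have "sum m {..<n} = m i + sum m ({..<n} - {i})" using i by (simp add: sum.remove)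
      ultimately show False using ms mle[OF i(1)] assms by simp
    qed
    have "(\<lambda>t. mv m j i t + mv m i j t) \<in> A_m n d m"
      apply (rule pair_in)
      using T_mv assms(3) i j apply auto[2]
      using i j by (auto simp: mv_def fun_eq_iff)
    moreover have "(\<lambda>t. mv m j i t + mv m i j t) = (\<lambda>t. m t + g t)"
      using True i j by (auto simp: mv_def fun_eq_iff)
    ultimately show ?thesis by simp
  next
    case False
    have gz: "\<forall>k\<ge>n. g k = 0" and gs: "sum g {..<n} = d"
      using g by (auto simp: T_def abs_vec_def)
    obtain i where i: "i < n" "g i > m i"
    proof (rule ccontr)
      assume "\<not> thesis"
      then have le: "\<forall>k<n. g k \<le> m k" using that by force
      obtain k where k: "g k \<noteq> m k" using False by auto
      have "k < n" using k gz mz by (metis not_le)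
      then have "sum g {..<n} < sum m {..<n}"
        using le k by (intro sum_strict_mono_ex1) (auto simp: order.strict_iff_order)
      then show False using gs ms by simp
    qed
    obtain j where j: "j < n" "g j < m j"
    proof (rule ccontr)
      assume "\<not> thesis"
      then have le: "\<forall>k<n. m k \<le> g k" using that by force
      have "sum m {..<n} < sum g {..<n}"
        using le i by (intro sum_strict_mono_ex1) auto
      then show False using gs ms by simp
    qed
    have ij: "i \<noteq> j" using i j by auto
    have u: "mv m i j \<in> T n d" "mv m i j \<noteq> m"
      using T_mv assms(3) i j ij by (auto simp: mv_def fun_eq_iff)
    have v: "mv g j i \<in> T n d"
      using T_mv g i j ij by auto
    have uv: "(\<lambda>t. m t + g t) = (\<lambda>t. mv m i j t + mv g j i t)"
      using i j ij by (auto simp: mv_def fun_eq_iff)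
    show ?thesis
    proof (cases "mv g j i = m")
      case False
      then show ?thesis using uv pair_in[OF u(1) v u(2) False] by simp
    next
      case True
      have e: "(\<lambda>t. m t + g t) = (\<lambda>t. mv m i j t + m t)" using uv True by simp
      show ?thesis
      proof (cases "\<exists>k<n. k \<noteq> i \<and> k \<noteq> j \<and> m k \<ge> 1")
        case True
        then obtain k where k: "k < n" "k \<noteq> i" "k \<noteq> j" "m k \<ge> 1" by auto
        have "(\<lambda>t. mv m k j t + mv m i k t) \<in> A_m n d m"
          apply (rule pair_in)
          using T_mv assms(3) i j k apply auto[2]
          using i j k by (auto simp: mv_def fun_eq_iff)
        moreover have "(\<lambda>t. mv m k j t + mv m i k t) = (\<lambda>t. mv m i j t + m t)"
          using i j k by (auto simp: mv_def fun_eq_iff)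
        ultimately show ?thesis using e by simp
      next
        case False
        then have "\<forall>k\<in>{..<n} - {i} - {j}. m k = 0" by auto
        then have "sum m ({..<n} - {i} - {j}) = 0" by simp
        then have "m i + m j = d" using sum_two[OF i(1) j(1) ij, of m] ms by simp
        then have mi: "m i \<ge> 2" and mj: "m j \<ge> 2" using mle[OF i(1)] mle[OF j(1)] assms by auto
        have "(\<lambda>t. mv (mv m i j) i j t + mv m j i t) \<in> A_m n d m"
          apply (rule pair_in)
          subgoal by (rule T_mv[OF u(1) i(1) j(1) ij]) (use mj ij in \<open>simp add: mv_def\<close>)
          subgoal using T_mv[OF assms(3) j(1) i(1)] mi ij by simp
          using i j ij mj mi by (auto simp: mv_def fun_eq_iff)
        moreover have "(\<lambda>t. mv (mv m i j) i j t + mv m j i t) = (\<lambda>t. mv m i j t + m t)"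
          using i j ij mi mj by (auto simp: mv_def fun_eq_iff)
        ultimately show ?thesis using e by simp
      qed
    qed
  qed
  have key2: "(\<lambda>t. m t + y t) \<in> A_m n d m" if "y \<in> A_m n d m" for y
    using that unfolding A_m_def
  proof induction
    case (base x)
    then show ?case using key1 unfolding A_m_def by auto
  next
    case (add x y)
    have "(\<lambda>t. m t + (x t + y t)) = (\<lambda>t. (m t + x t) + y t)" by (simp add: add.assoc)
    then show ?case using add semigen.add by metis
  qed
  have key3: "x = m \<or> x \<in> A_m n d m" if "x \<in> A n d" for x
    using that unfolding A_def
  proof induction
    case (base x)
    then show ?case unfolding A_m_def by (auto intro: semigen.base)
  next
    case (add x y)
    show ?case
    proof (cases "x = m")
      case xm: True
      show ?thesis
      proof (cases "y = m")
        case True then show ?thesis using xm key1 assms(3) by auto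
      next
        case False then show ?thesis using xm add key2 by auto
      qed
    next
      case xn: False
      show ?thesis
      proof (cases "y = m")
        case True
        have "(\<lambda>t. x t + y t) = (\<lambda>t. m t + x t)" using True by (simp add: add.commute)
        then show ?thesis using xn add key2 by auto
      next
        case False then show ?thesis using xn add semigen.add unfolding A_m_def by auto
      qed
    qed
  qed
  have mA: "m \<in> A n d" unfolding A_def using assms(3) by (rule semigen.base)
  have sub: "A_m n d m \<subseteq> A n d"
    unfolding A_def A_m_def using semigen_mono by blast
  show ?thesis using mA mAm key3 sub by blast
qed

end
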